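(* There exists a combinatorial auction (with truthful bids) that admits a Walrasian equilibrium on the original items, but in which for every Walrasian equilibrium $(x^*,p)$ on the original items some winning bidder $i$ pays strictly more than her winning level, i.e. $p\,a^{i*}>w(\mathcal I\setminus i,c,\mathcal K)-w(\mathcal I\setminus i,c-a^{i*},\mathcal K)$. In this sense, minimal Walrasian equilibrium prices may be strictly greater than winning-level payments.
   Context: Combinatorial auction: item types $j\in\mathcal J$ with supply $c_j\in\mathbb Z_{\ge1}$ (vector $c$); bidders $\mathcal I$; finite set of bids $\mathcal K$, bid $k$ made by bidder $i(k)$ with bundle $a^k\in\mathbb Z^J_{\ge0}$, $a^k\le c$, amount $b_k\ge0$; $\mathcal K_i$ = bids of bidder $i$. Feasible allocation: $x\in\{0,1\}^K$ with $\sum_k a^kx_k\le c$ and at most one accepted bid per bidder. $w(\mathcal C,c',\mathcal K)$ = maximum total bid amount over feasible allocations with supply $c'$ using only bids of bidders in $\mathcal C$. $x^*$ efficient allocation; $a^{i*},b_{i*}$ bundle and amount of $i$'s accepted bid ($\bm 0,0$ if none). A Walrasian equilibrium (on the original items, i.e. with no artificial items) is $(x^*,p)$ with $p\in\mathbb R^J_{\ge0}$, $s_i=b_{i*}-p\,a^{i*}\ge0$ for all $i$, $p\,a^k+s_{i(k)}\ge b_k$ for all bids $k$, and $p_j=0$ for every item in excess supply under $x^*$. *)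

theory Defs
  imports Complex_Main
begin

(* An auction is given by:
   J :: item types (finite set), c :: supply per item,
   I :: bidders, K :: bids (finite), bidder :: bid -> bidder i(k),
   a :: bid -> item -> quantity (bundle a^k), b :: bid -> real (amount b_k). *)

definition valid_auction ::
  "nat set \<Rightarrow> (nat \<Rightarrow> nat) \<Rightarrow> nat set \<Rightarrow> nat set \<Rightarrow> (nat \<Rightarrow> nat)
   \<Rightarrow> (nat \<Rightarrow> nat \<Rightarrow> nat) \<Rightarrow> (nat \<Rightarrow> real) \<Rightarrow> bool" where
  "valid_auction J c I K bidder a b \<longleftrightarrow>
     finite J \<and> finite I \<and> finite K \<and>
     (\<forall>j\<in>J. c j \<ge> 1) \<and>
     (\<forall>k\<in>K. bidder k \<in> I \<and> b k \<ge> 0 \<and> (\<forall>j\<in>J. a k j \<le> c j) \<and> (\<forall>j. j \<notin> J \<longrightarrow> a k j = 0))"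

(* A feasible allocation (given as the set S of accepted bids, i.e. x_k = 1 iff k \<in> S)
   with supply c' using only bids of bidders in C: at most one accepted bid per bidder. *)
definition feasible_alloc ::
  "nat set \<Rightarrow> nat set \<Rightarrow> (nat \<Rightarrow> nat) \<Rightarrow> (nat \<Rightarrow> nat \<Rightarrow> nat)
   \<Rightarrow> nat set \<Rightarrow> (nat \<Rightarrow> nat) \<Rightarrow> nat set \<Rightarrow> bool" where
  "feasible_alloc J K bidder a C c' S \<longleftrightarrow>
     S \<subseteq> K \<and> (\<forall>k\<in>S. bidder k \<in> C) \<and>
     (\<forall>j\<in>J. (\<Sum>k\<in>S. a k j) \<le> c' j) \<and> inj_on bidder S"

definition wval ::
  "nat set \<Rightarrow> nat set \<Rightarrow> (nat \<Rightarrow> nat) \<Rightarrow> (nat \<Rightarrow> nat \<Rightarrow> nat) \<Rightarrow> (nat \<Rightarrow> real)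
   \<Rightarrow> nat set \<Rightarrow> (nat \<Rightarrow> nat) \<Rightarrow> real" where
  "wval J K bidder a b C c' =
     Max ((\<lambda>S. \<Sum>k\<in>S. b k) ` {S. feasible_alloc J K bidder a C c' S})"

definition efficient_alloc ::
  "nat set \<Rightarrow> (nat \<Rightarrow> nat) \<Rightarrow> nat set \<Rightarrow> nat set \<Rightarrow> (nat \<Rightarrow> nat)
   \<Rightarrow> (nat \<Rightarrow> nat \<Rightarrow> nat) \<Rightarrow> (nat \<Rightarrow> real) \<Rightarrow> nat set \<Rightarrow> bool" where
  "efficient_alloc J c I K bidder a b S \<longleftrightarrow>
     feasible_alloc J K bidder a I c S \<and> (\<Sum>k\<in>S. b k) = wval J K bidder a b I c"

(* bundle a^{i*} and amount b_{i*} of bidder i's accepted bid (0 if none);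
   since at most one bid per bidder is accepted, the sums have at most one term *)
definition won_bundle :: "nat set \<Rightarrow> (nat \<Rightarrow> nat) \<Rightarrow> (nat \<Rightarrow> nat \<Rightarrow> nat) \<Rightarrow> nat \<Rightarrow> nat \<Rightarrow> nat" where
  "won_bundle S bidder a i = (\<lambda>j. \<Sum>k\<in>{k\<in>S. bidder k = i}. a k j)"

definition won_amount :: "nat set \<Rightarrow> (nat \<Rightarrow> nat) \<Rightarrow> (nat \<Rightarrow> real) \<Rightarrow> nat \<Rightarrow> real" where
  "won_amount S bidder b i = (\<Sum>k\<in>{k\<in>S. bidder k = i}. b k)"

definition bundle_price :: "nat set \<Rightarrow> (nat \<Rightarrow> real) \<Rightarrow> (nat \<Rightarrow> nat) \<Rightarrow> real" where
  "bundle_price J p q = (\<Sum>j\<in>J. p j * real (q j))"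

definition walrasian_eq ::
  "nat set \<Rightarrow> (nat \<Rightarrow> nat) \<Rightarrow> nat set \<Rightarrow> nat set \<Rightarrow> (nat \<Rightarrow> nat)
   \<Rightarrow> (nat \<Rightarrow> nat \<Rightarrow> nat) \<Rightarrow> (nat \<Rightarrow> real) \<Rightarrow> nat set \<Rightarrow> (nat \<Rightarrow> real) \<Rightarrow> bool" where
  "walrasian_eq J c I K bidder a b S p \<longleftrightarrow>
     (\<forall>j\<in>J. p j \<ge> 0) \<and>
     (\<forall>i\<in>I. won_amount S bidder b i - bundle_price J p (won_bundle S bidder a i) \<ge> 0) \<and>
     (\<forall>k\<in>K. bundle_price J p (a k)
              + (won_amount S bidder b (bidder k) - bundle_price J p (won_bundle S bidder a (bidder k)))
              \<ge> b k) \<and>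
     (\<forall>j\<in>J. (\<Sum>k\<in>S. a k j) < c j \<longrightarrow> p j = 0)"

end

theory Submission
  imports Defs
begin

definition ea :: "nat \<Rightarrow> nat \<Rightarrow> nat" where
  "ea k j = (if k = 0 then (if j = 0 then 1 else 0)
             else if k = 1 then (if j = 1 then 1 else 0)
             else if k = 2 then (if j \<le> 1 then 1 else 0) else 0)"

definition eb :: "nat \<Rightarrow> real" where
  "eb k = (if k = 2 then 3 else if k \<le> 1 then 2 else 0)"

lemma sets: "{k\<in>{0,1::nat}. id k = i} = (if i \<le> 1 then {i} else {})"
    by auto
lemma wb0: "won_bundle {0,1} id ea 0 = ea 0" "won_bundle {0,1} id ea 1 = ea 1"
    "won_bundle {0,1} id ea 2 = (\<lambda>_. 0)"
    unfolding won_bundle_def sets by auto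
lemma  wa: "won_amount {0,1} id eb 0 = 2" "won_amount {0,1} id eb 1 = 2"
    "won_amount {0,1} id eb 2 = 0"
    unfolding won_amount_def sets by (auto simp: eb_def)
lemma wbg: "won_bundle {0,1} id ea i = (if i \<le> 1 then ea i else (\<lambda>_. 0))"
  unfolding won_bundle_def sets by auto
lemma wag: "won_amount {0,1} id eb i = (if i \<le> 1 then eb i else 0)"
  unfolding won_amount_def sets by auto
lemma sub3: assumes "S \<subseteq> {0,1,2::nat}" shows "S \<in> {{},{0},{1},{2},{0,1},{0,2},{1,2},{0,1,2}}"
proof -
  have e: "S = (if 0\<in>S then {0} else {}) \<union> (if 1\<in>S then {1} else {}) \<union> (if 2\<in>S then {2} else {})"
    using assms by auto
  show ?thesis
    apply (subst e)
    apply (cases "0\<in>S"; cases "1\<in>S"; cases "2\<in>S")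
    apply (simp_all only: if_True if_False Un_empty_left Un_empty_right Un_insert_left)
    apply (simp_all add: insert_commute)
    done
qed

lemma wval_eqI:
  assumes "finite K" "feasible_alloc J K bidder a C c' S0"
    "\<And>S. feasible_alloc J K bidder a C c' S \<Longrightarrow> (\<Sum>k\<in>S. b k) \<le> (\<Sum>k\<in>S0. b k)"
  shows "wval J K bidder a b C c' = (\<Sum>k\<in>S0. b k)"
proof -
  have "{S. feasible_alloc J K bidder a C c' S} \<subseteq> Pow K"
    unfolding feasible_alloc_def by blast
  hence fin: "finite {S. feasible_alloc J K bidder a C c' S}"
    by (rule finite_subset) (simp add: assms(1))
  show ?thesis unfolding wval_def
  proof (rule Max_eqI)
    show "finite ((\<lambda>S. \<Sum>k\<in>S. b k) ` {S. feasible_alloc J K bidder a C c' S})"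
      using fin by (rule finite_imageI)
    show "y \<le> (\<Sum>k\<in>S0. b k)" if "y \<in> (\<lambda>S. \<Sum>k\<in>S. b k) ` {S. feasible_alloc J K bidder a C c' S}" for y
    proof -
      from that obtain S where "feasible_alloc J K bidder a C c' S" "y = (\<Sum>k\<in>S. b k)" by auto
      thus ?thesis using assms(3) by simp
    qed
    show "(\<Sum>k\<in>S0. b k) \<in> (\<lambda>S. \<Sum>k\<in>S. b k) ` {S. feasible_alloc J K bidder a C c' S}"
      using assms(2) by (intro imageI) simp
  qed
qed
lemma bound:
  assumes "feasible_alloc {0,1} {0,1,2} id ea C c' S"
    and "\<And>S. S \<in> {{},{0},{1},{2},{0,1},{0,2},{1,2},{0,1,2}} \<Longrightarrow> feasible_alloc {0,1} {0,1,2} id ea C c' S \<Longrightarrow> (\<Sum>k\<in>S. eb k) \<le> v"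
  shows "(\<Sum>k\<in>S. eb k) \<le> v"
proof -
  have "S \<subseteq> {0,1,2}" using assms(1) unfolding feasible_alloc_def by blast
  from sub3[OF this] assms(1) show ?thesis by (rule assms(2))
qed

lemma w4: "wval {0,1} {0,1,2} id ea eb {0,1,2} (\<lambda>_. 1) = 4"
  proof -
    have "wval {0,1} {0,1,2} id ea eb {0,1,2} (\<lambda>_. 1) = (\<Sum>k\<in>{0,1}. eb k)"
      apply (rule wval_eqI)
        apply simp
       apply (simp add: feasible_alloc_def ea_def)
      apply (rule bound, assumption)
      apply (elim insertE; simp add: feasible_alloc_def ea_def eb_def)
      done
    thus ?thesis by (simp add: eb_def)
  qed

lemma w3: "wval {0,1} {0,1,2} id ea eb ({0,1,2} - {0}) (\<lambda>_. 1) = 3"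
          "wval {0,1} {0,1,2} id ea eb ({0,1,2} - {1}) (\<lambda>_. 1) = 3"
proof -
    have "wval {0,1} {0,1,2} id ea eb ({0,1,2} - {0}) (\<lambda>_. 1) = (\<Sum>k\<in>{2}. eb k)"
      apply (rule wval_eqI)
        apply simp
       apply (simp add: feasible_alloc_def ea_def)
      apply (rule bound, assumption)
      apply (elim insertE; simp add: feasible_alloc_def ea_def eb_def)
      done
    thus "wval {0,1} {0,1,2} id ea eb ({0,1,2} - {0}) (\<lambda>_. 1) = 3" by (simp add: eb_def)
    have "wval {0,1} {0,1,2} id ea eb ({0,1,2} - {1}) (\<lambda>_. 1) = (\<Sum>k\<in>{2}. eb k)"
      apply (rule wval_eqI)
        apply simp
       apply (simp add: feasible_alloc_def ea_def)
      apply (rule bound, assumption)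
      apply (elim insertE; simp add: feasible_alloc_def ea_def eb_def)
      done
    thus "wval {0,1} {0,1,2} id ea eb ({0,1,2} - {1}) (\<lambda>_. 1) = 3" by (simp add: eb_def)
qed

lemma w2: "wval {0,1} {0,1,2} id ea eb ({0,1,2} - {0}) (\<lambda>j. (\<lambda>_. 1) j - won_bundle {0,1} id ea 0 j) = 2"
          "wval {0,1} {0,1,2} id ea eb ({0,1,2} - {1}) (\<lambda>j. (\<lambda>_. 1) j - won_bundle {0,1} id ea 1 j) = 2"
proof -
    have "wval {0,1} {0,1,2} id ea eb ({0,1,2} - {0}) (\<lambda>j. (\<lambda>_. 1) j - won_bundle {0,1} id ea 0 j) = (\<Sum>k\<in>{1}. eb k)"
      unfolding wb0
      apply (rule wval_eqI)
        apply simp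
       apply (simp add: feasible_alloc_def ea_def)
      apply (rule bound, assumption)
      apply (elim insertE; simp add: feasible_alloc_def ea_def eb_def)
      done
    thus "wval {0,1} {0,1,2} id ea eb ({0,1,2} - {0}) (\<lambda>j. (\<lambda>_. 1) j - won_bundle {0,1} id ea 0 j) = 2" by (simp add: eb_def)
    have "wval {0,1} {0,1,2} id ea eb ({0,1,2} - {1}) (\<lambda>j. (\<lambda>_. 1) j - won_bundle {0,1} id ea 1 j) = (\<Sum>k\<in>{0}. eb k)"
      unfolding wb0
      apply (rule wval_eqI)
        apply simp
       apply (simp add: feasible_alloc_def ea_def)
      apply (rule bound, assumption)
      apply (elim insertE; simp add: feasible_alloc_def ea_def eb_def)
      done
    thus "wval {0,1} {0,1,2} id ea eb ({0,1,2} - {1}) (\<lambda>j. (\<lambda>_. 1) j - won_bundle {0,1} id ea 1 j) = 2" by (simp add: eb_def)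
qed

theorem proposition1:
  shows "\<exists>J c I K bidder a b S.
     valid_auction J c I K bidder a b \<and>
     efficient_alloc J c I K bidder a b S \<and>
     (\<exists>p. walrasian_eq J c I K bidder a b S p) \<and>
     (\<forall>p. walrasian_eq J c I K bidder a b S p \<longrightarrow>
        (\<exists>i\<in>I. (\<exists>k\<in>S. bidder k = i) \<and>
           bundle_price J p (won_bundle S bidder a i) >
             wval J K bidder a b (I - {i}) c
             - wval J K bidder a b (I - {i}) (\<lambda>j. c j - won_bundle S bidder a i j)))"
proof -
  let ?J = "{0,1::nat}" and ?K = "{0,1,2::nat}" and ?c = "\<lambda>_::nat. 1::nat"
  have valid: "valid_auction ?J ?c ?K ?K id ea eb"
    by (auto simp: valid_auction_def ea_def eb_def)
  have eff: "efficient_alloc ?J ?c ?K ?K id ea eb {0,1}"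
    using w4 by (simp add: efficient_alloc_def feasible_alloc_def ea_def eb_def)
  have we: "walrasian_eq ?J ?c ?K ?K id ea eb {0,1} (\<lambda>_. 3/2)"
    unfolding walrasian_eq_def wag wbg by (simp add: bundle_price_def ea_def eb_def)
  have all: "\<exists>i\<in>?K. (\<exists>k\<in>{0,1}. id k = i) \<and>
           bundle_price ?J p (won_bundle {0,1} id ea i) >
             wval ?J ?K id ea eb (?K - {i}) ?c
             - wval ?J ?K id ea eb (?K - {i}) (\<lambda>j. ?c j - won_bundle {0,1} id ea i j)"
    if "walrasian_eq ?J ?c ?K ?K id ea eb {0,1} p" for p
  proof -
    have h: "\<forall>k\<in>?K. bundle_price ?J p (ea k) + (won_amount {0,1} id eb (id k) - bundle_price ?J p (won_bundle {0,1} id ea (id k))) \<ge> eb k"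
      using that unfolding walrasian_eq_def by (rule conjunct1[OF conjunct2[OF conjunct2]])
    have "(2::nat) \<in> ?K" by simp
    from bspec[OF h this] have "bundle_price ?J p (ea 2) + (won_amount {0,1} id eb 2 - bundle_price ?J p (won_bundle {0,1} id ea 2)) \<ge> eb 2"
      by simp
    hence "p 0 + p 1 \<ge> 3" unfolding wa wb0 by (simp add: bundle_price_def ea_def eb_def)
    hence "p 0 > 1 \<or> p 1 > 1" by linarith
    thus ?thesis
    proof
      assume "p 0 > 1"
      hence "bundle_price ?J p (won_bundle {0,1} id ea 0) >
             wval ?J ?K id ea eb (?K - {0}) ?c
             - wval ?J ?K id ea eb (?K - {0}) (\<lambda>j. ?c j - won_bundle {0,1} id ea 0 j)"
        unfolding w3 w2 unfolding wb0 by (simp add: bundle_price_def ea_def)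
      thus ?thesis by (intro bexI[of _ 0] conjI) auto
    next
      assume "p 1 > 1"
      hence "bundle_price ?J p (won_bundle {0,1} id ea 1) >
             wval ?J ?K id ea eb (?K - {1}) ?c
             - wval ?J ?K id ea eb (?K - {1}) (\<lambda>j. ?c j - won_bundle {0,1} id ea 1 j)"
        unfolding w3 w2 unfolding wb0 by (simp add: bundle_price_def ea_def)
      thus ?thesis by (intro bexI[of _ 1] conjI) auto
    qed
  qed
  show ?thesis
    apply (rule exI[of _ ?J], rule exI[of _ ?c], rule exI[of _ ?K], rule exI[of _ ?K],
      rule exI[of _ id], rule exI[of _ ea], rule exI[of _ eb], rule exI[of _ "{0,1}"])
    apply (intro conjI valid eff)
     apply (rule exI[of _ "\<lambda>_. 3/2"], rule we)
    apply (intro allI impI)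
    apply (erule all)
    done
qed

end
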